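(* Let $\mathcal E$ be a nest on a complex Banach space $X$ and let $\mathcal J$ be a $\mathcal T(\mathcal E)$-bimodule that is closed in the weak operator topology. Then $\mathcal J=\overline{\mathcal J_0}^{\mathrm{WOT}}$, where $\mathcal J_0$ is the set of finite rank operators in $\mathcal J$.
   Context: A nest $\mathcal E$ on $X$ is a family of closed linear subspaces of $X$, totally ordered by inclusion, containing $\{0\}$ and $X$, closed under arbitrary meets (intersections) and joins (norm-closed linear spans of unions). $\mathcal T(\mathcal E)=\{T\in\mathcal B(X): TE\subseteq E\ \forall E\in\mathcal E\}$. A $\mathcal T(\mathcal E)$-bimodule is a linear subspace $\mathcal J\subseteq\mathcal B(X)$ with $\mathcal T(\mathcal E)\mathcal J\subseteq\mathcal J$ and $\mathcal J\mathcal T(\mathcal E)\subseteq\mathcal J$. *)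

theory Defs
  imports "HOL-Analysis.Analysis"
begin

class complex_banach = banach +
  fixes scaleC :: "complex \<Rightarrow> 'a \<Rightarrow> 'a"
  assumes scaleC_add_right: "scaleC a (x + y) = scaleC a x + scaleC a y"
    and scaleC_add_left: "scaleC (a + b) x = scaleC a x + scaleC b x"
    and scaleC_scaleC: "scaleC a (scaleC b x) = scaleC (a * b) x"
    and scaleC_one: "scaleC 1 x = x"
    and scaleR_scaleC: "scaleR r x = scaleC (complex_of_real r) x"
    and norm_scaleC: "norm (scaleC a x) = cmod a * norm x"

definition csubspace :: "'a::complex_banach set \<Rightarrow> bool" where
  "csubspace M \<longleftrightarrow> 0 \<in> M \<and> (\<forall>x\<in>M. \<forall>y\<in>M. x + y \<in> M) \<and> (\<forall>c. \<forall>x\<in>M. scaleC c x \<in> M)"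

definition cspan :: "'a::complex_banach set \<Rightarrow> 'a set" where
  "cspan A = \<Inter>{M. csubspace M \<and> A \<subseteq> M}"

definition closed_csubspace :: "'a::complex_banach set \<Rightarrow> bool" where
  "closed_csubspace M \<longleftrightarrow> csubspace M \<and> closed M"

definition subspace_join :: "'a::complex_banach set set \<Rightarrow> 'a set" where
  "subspace_join S = closure (cspan (\<Union>S))"

definition nest :: "'a::complex_banach set set \<Rightarrow> bool" where
  "nest \<E> \<longleftrightarrow> (\<forall>E\<in>\<E>. closed_csubspace E)
     \<and> (\<forall>E\<in>\<E>. \<forall>F\<in>\<E>. E \<subseteq> F \<or> F \<subseteq> E)
     \<and> {0} \<in> \<E> \<and> UNIV \<in> \<E>
     \<and> (\<forall>S\<subseteq>\<E>. \<Inter>S \<in> \<E>)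
     \<and> (\<forall>S\<subseteq>\<E>. subspace_join S \<in> \<E>)"

definition bops :: "('a::complex_banach \<Rightarrow>\<^sub>L 'a) set" where
  "bops = {T. \<forall>c x. blinfun_apply T (scaleC c x) = scaleC c (blinfun_apply T x)}"

definition cdual :: "('a::complex_banach \<Rightarrow> complex) set" where
  "cdual = {f. bounded_linear f \<and> (\<forall>c x. f (scaleC c x) = c * f x)}"

text \<open>Weak operator topology: the coarsest topology making T \<mapsto> f(T x) continuous
  for all x in X and f in the dual of X.\<close>
definition wot :: "('a::complex_banach \<Rightarrow>\<^sub>L 'a) topology" where
  "wot = pullback_topology UNIV
     (\<lambda>T. \<lambda>(x, f). if f \<in> cdual then f (blinfun_apply T x) else 0)
     (product_topology (\<lambda>_. euclidean) UNIV)"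

definition wot_B :: "('a::complex_banach \<Rightarrow>\<^sub>L 'a) topology" where
  "wot_B = subtopology wot bops"

definition nest_alg :: "'a::complex_banach set set \<Rightarrow> ('a \<Rightarrow>\<^sub>L 'a) set" where
  "nest_alg \<E> = {T \<in> bops. \<forall>E\<in>\<E>. blinfun_apply T ` E \<subseteq> E}"

definition bimodule :: "('a::complex_banach \<Rightarrow>\<^sub>L 'a) set \<Rightarrow> ('a \<Rightarrow>\<^sub>L 'a) set \<Rightarrow> bool" where
  "bimodule \<A> J \<longleftrightarrow> J \<subseteq> bops \<and> 0 \<in> J
     \<and> (\<forall>S\<in>J. \<forall>T\<in>J. S + T \<in> J)
     \<and> (\<forall>c. \<forall>T\<in>J. \<exists>U\<in>J. \<forall>x. blinfun_apply U x = scaleC c (blinfun_apply T x))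
     \<and> (\<forall>A\<in>\<A>. \<forall>T\<in>J. A o\<^sub>L T \<in> J \<and> T o\<^sub>L A \<in> J)"

definition finite_rank :: "('a::complex_banach \<Rightarrow>\<^sub>L 'a) \<Rightarrow> bool" where
  "finite_rank T \<longleftrightarrow> (\<exists>F. finite F \<and> range (blinfun_apply T) \<subseteq> cspan F)"

end

theory Submission
  imports Defs
begin

definition hbgood :: "real \<Rightarrow> ('a::real_normed_vector \<times> real) set \<Rightarrow> ('a \<times> real) set \<Rightarrow> bool" where
  "hbgood C G0 G \<longleftrightarrow> G0 \<subseteq> G \<and> (\<forall>x a b. (x,a)\<in>G \<longrightarrow> (x,b)\<in>G \<longrightarrow> a=b)
    \<and> (\<forall>x a y b. (x,a)\<in>G \<longrightarrow> (y,b)\<in>G \<longrightarrow> (x+y,a+b)\<in>G)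
    \<and> (\<forall>x a r. (x,a)\<in>G \<longrightarrow> (r *\<^sub>R x, r*a)\<in>G)
    \<and> (\<forall>x a. (x,a)\<in>G \<longrightarrow> a \<le> C * norm x)"

lemma hb_extend:
  fixes G :: "('a::real_normed_vector \<times> real) set"
  assumes g: "hbgood C G0 G" and C: "C \<ge> 0" and ne: "G \<noteq> {}" and x0: "x0 \<notin> Domain G"
  shows "\<exists>G'. hbgood C G0 G' \<and> G \<subset> G'"
proof -
  have fn: "\<And>x a b. (x,a)\<in>G \<Longrightarrow> (x,b)\<in>G \<Longrightarrow> a=b"
    and add: "\<And>x a y b. (x,a)\<in>G \<Longrightarrow> (y,b)\<in>G \<Longrightarrow> (x+y,a+b)\<in>G"
    and sc: "\<And>x a r. (x,a)\<in>G \<Longrightarrow> (r *\<^sub>R x, r*a)\<in>G"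
    and bd: "\<And>x a. (x,a)\<in>G \<Longrightarrow> a \<le> C * norm x"
    and G0: "G0 \<subseteq> G" using g unfolding hbgood_def by blast+
  obtain x1 a1 where x1: "(x1,a1) \<in> G" using ne by auto
  have z: "(0,0) \<in> G" using sc[OF x1, of 0] by simp
  have le: "a - C*norm(y - x0) \<le> C*norm(z + x0) - b" if "(y,a)\<in>G" "(z,b)\<in>G" for y a z b
  proof -
    have "a + b \<le> C * norm (y + z)" using bd[OF add[OF that]] .
    also have "norm (y + z) \<le> norm (y - x0) + norm (z + x0)"
      using norm_triangle_ineq[of "y - x0" "z + x0"] by simp
    finally show ?thesis using C
      by (smt (verit, ccfv_SIG) mult_left_mono distrib_left)
  qed
  define S where "S = {a - C*norm(y - x0) | y a. (y,a)\<in>G}"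
  define c where "c = Sup S"
  have Sne: "S \<noteq> {}" using z unfolding S_def by auto
  have Sbdd: "bdd_above S" unfolding S_def bdd_above_def using le[OF _ z] by auto
  have c1: "a - C*norm(y - x0) \<le> c" if "(y,a)\<in>G" for y a
    unfolding c_def by (rule cSup_upper[OF _ Sbdd]) (use that S_def in auto)
  have c2: "c \<le> C*norm(z + x0) - b" if "(z,b)\<in>G" for z b
    unfolding c_def by (rule cSup_least[OF Sne]) (use that le S_def in auto)
  define G' where "G' = {(y + t *\<^sub>R x0, a + t*c) | y a t. (y,a)\<in>G}"
  have GG': "G \<subseteq> G'" unfolding G'_def by force
  have new: "(x0, c) \<in> G'" unfolding G'_def using z by force
  have "(x0, c) \<notin> G" using x0 by auto
  hence psub: "G \<subset> G'" using GG' new by blast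
  have fn': "a = b" if P1: "(x,a)\<in>G'" and P2: "(x,b)\<in>G'" for x a b
  proof -
    obtain y1 a1 t1 where 1: "x = y1 + t1 *\<^sub>R x0" "a = a1 + t1*c" "(y1,a1)\<in>G" using P1 G'_def by auto
    obtain y2 a2 t2 where 2: "x = y2 + t2 *\<^sub>R x0" "b = a2 + t2*c" "(y2,a2)\<in>G" using P2 G'_def by auto
    have t: "t1 = t2"
    proof (rule ccontr)
      assume ne: "t1 \<noteq> t2"
      have "(y2 + (-1) *\<^sub>R y1, a2 + (-1) * a1) \<in> G" using add[OF 2(3) sc[OF 1(3)]] .
      hence "((1/(t1-t2)) *\<^sub>R (y2 - y1), (1/(t1-t2)) * (a2 - a1)) \<in> G" using sc by fastforce
      moreover have "(1/(t1-t2)) *\<^sub>R (y2 - y1) = x0"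
      proof -
        have "y2 - y1 = (t1 - t2) *\<^sub>R x0" using 1(1) 2(1) by (simp add: algebra_simps)
        thus ?thesis using ne by simp
      qed
      ultimately show False using x0 by force
    qed
    hence "y1 = y2" using 1 2 by simp
    thus ?thesis using fn 1 2 t by auto
  qed
  have add': "(x+y,a+b)\<in>G'" if P1: "(x,a)\<in>G'" and P2: "(y,b)\<in>G'" for x a y b
  proof -
    obtain y1 a1 t1 where 1: "x = y1 + t1 *\<^sub>R x0" "a = a1 + t1*c" "(y1,a1)\<in>G" using P1 G'_def by auto
    obtain y2 a2 t2 where 2: "y = y2 + t2 *\<^sub>R x0" "b = a2 + t2*c" "(y2,a2)\<in>G" using P2 G'_def by auto
    have "x + y = (y1+y2) + (t1+t2) *\<^sub>R x0" "a + b = (a1+a2) + (t1+t2)*c"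
      using 1 2 by (simp_all add: algebra_simps)
    thus ?thesis unfolding G'_def using add[OF 1(3) 2(3)] by blast
  qed
  have sc': "(r *\<^sub>R x, r*a)\<in>G'" if P1: "(x,a)\<in>G'" for x a r
  proof -
    obtain y1 a1 t1 where 1: "x = y1 + t1 *\<^sub>R x0" "a = a1 + t1*c" "(y1,a1)\<in>G" using P1 G'_def by auto
    have "r *\<^sub>R x = r *\<^sub>R y1 + (r*t1) *\<^sub>R x0" "r*a = r*a1 + (r*t1)*c"
      using 1 by (simp_all add: algebra_simps)
    thus ?thesis unfolding G'_def using sc[OF 1(3)] by blast
  qed
  have bd': "a \<le> C * norm x" if P1: "(x,a)\<in>G'" for x a
  proof -
    obtain y a1 t where 1: "x = y + t *\<^sub>R x0" "a = a1 + t*c" "(y,a1)\<in>G" using P1 G'_def by auto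
    consider "t = 0" | "t > 0" | "t < 0" by linarith
    thus ?thesis
    proof cases
      case 1 thus ?thesis using bd \<open>x = _\<close> \<open>a = _\<close> \<open>(y,a1)\<in>G\<close> by simp
    next
      case 2
      have "c \<le> C*norm((1/t) *\<^sub>R y + x0) - (1/t)*a1" using c2[OF sc[OF \<open>(y,a1)\<in>G\<close>]] .
      hence "t * c \<le> t * (C*norm((1/t) *\<^sub>R y + x0) - (1/t)*a1)" using 2 by simp
      also have "\<dots> = C * (t * norm((1/t) *\<^sub>R y + x0)) - a1" using 2 by (simp add: algebra_simps)
      also have "t * norm((1/t) *\<^sub>R y + x0) = norm (t *\<^sub>R ((1/t) *\<^sub>R y + x0))" using 2 by simp
      also have "t *\<^sub>R ((1/t) *\<^sub>R y + x0) = y + t *\<^sub>R x0" using 2 by (simp add: algebra_simps)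
      finally show ?thesis using 1 by simp
    next
      case 3
      define s where "s = -t"
      have s: "s > 0" using 3 s_def by simp
      have "(1/s)*a1 - C*norm((1/s) *\<^sub>R y - x0) \<le> c" using c1[OF sc[OF \<open>(y,a1)\<in>G\<close>]] .
      hence "s * ((1/s)*a1 - C*norm((1/s) *\<^sub>R y - x0)) \<le> s * c" using s by simp
      hence "a1 - C * (s * norm((1/s) *\<^sub>R y - x0)) \<le> s * c" using s by (simp add: algebra_simps)
      also have "s * norm((1/s) *\<^sub>R y - x0) = norm (s *\<^sub>R ((1/s) *\<^sub>R y - x0))" using s by simp
      also have "s *\<^sub>R ((1/s) *\<^sub>R y - x0) = y + t *\<^sub>R x0" using s s_def by (simp add: algebra_simps)
      finally show ?thesis using 1 s_def by simp
    qed
  qed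
  have "hbgood C G0 G'" unfolding hbgood_def using G0 GG' fn' add' sc' bd' by blast
  thus ?thesis using psub by blast
qed

lemma hb_graph:
  fixes G0 :: "('a::real_normed_vector \<times> real) set"
  assumes g: "hbgood C G0 G0" and C: "C \<ge> 0" and ne: "G0 \<noteq> {}"
  shows "\<exists>G. hbgood C G0 G \<and> Domain G = UNIV"
proof -
  let ?A = "{G. hbgood C G0 G}"
  have "\<exists>M\<in>?A. \<forall>X\<in>?A. M \<subseteq> X \<longrightarrow> X = M"
  proof (rule subset_Zorn_nonempty)
    show "?A \<noteq> {}" using g by blast
    fix CC assume CC: "CC \<noteq> {}" "subset.chain ?A CC"
    hence ch: "\<And>X. X \<in> CC \<Longrightarrow> hbgood C G0 X" "\<And>X Y. X\<in>CC \<Longrightarrow> Y\<in>CC \<Longrightarrow> X \<subseteq> Y \<or> Y \<subseteq> X"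
      by (auto simp: subset_chain_def)
    have "hbgood C G0 (\<Union>CC)"
      unfolding hbgood_def
    proof (intro conjI allI impI)
      show "G0 \<subseteq> \<Union>CC" using CC(1) ch(1) unfolding hbgood_def by blast
    next
      fix x a b assume "(x,a) \<in> \<Union>CC" "(x,b) \<in> \<Union>CC"
      then obtain X Y where "X\<in>CC" "Y\<in>CC" "(x,a)\<in>X" "(x,b)\<in>Y" by auto
      thus "a = b" using ch unfolding hbgood_def by (metis subsetD)
    next
      fix x a y b assume "(x,a) \<in> \<Union>CC" "(y,b) \<in> \<Union>CC"
      then obtain X Y where XY: "X\<in>CC" "Y\<in>CC" "(x,a)\<in>X" "(y,b)\<in>Y" by auto
      show "(x+y,a+b) \<in> \<Union>CC"
      proof (cases "X \<subseteq> Y")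
        case True thus ?thesis using XY ch(1)[of Y] unfolding hbgood_def by blast
      next
        case False hence "Y \<subseteq> X" using ch(2) XY by blast
        thus ?thesis using XY ch(1)[of X] unfolding hbgood_def by blast
      qed
    next
      fix x a r assume "(x,a) \<in> \<Union>CC"
      then obtain X where "X\<in>CC" "(x,a)\<in>X" by auto
      thus "(r *\<^sub>R x, r*a) \<in> \<Union>CC" using ch(1)[of X] unfolding hbgood_def by blast
    next
      fix x a assume "(x,a) \<in> \<Union>CC"
      then obtain X where "X\<in>CC" "(x,a)\<in>X" by auto
      thus "a \<le> C * norm x" using ch(1)[of X] unfolding hbgood_def by blast
    qed
    thus "\<Union>CC \<in> ?A" by simp
  qed
  then obtain G where G: "hbgood C G0 G" and max: "\<And>X. hbgood C G0 X \<Longrightarrow> G \<subseteq> X \<Longrightarrow> X = G" by auto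
  have "Domain G = UNIV"
  proof (rule ccontr)
    assume "Domain G \<noteq> UNIV"
    then obtain x0 where "x0 \<notin> Domain G" by auto
    moreover have "G \<noteq> {}" using G ne unfolding hbgood_def by blast
    ultimately obtain G' where "hbgood C G0 G'" "G \<subset> G'" using hb_extend[OF G C] by blast
    thus False using max by blast
  qed
  thus ?thesis using G by blast
qed

lemma hb_real:
  fixes M :: "'a::real_normed_vector set"
  assumes cl: "closed M" and M0: "0 \<in> M" and Madd: "\<And>x y. x\<in>M \<Longrightarrow> y\<in>M \<Longrightarrow> x+y\<in>M"
    and Msc: "\<And>r x. x\<in>M \<Longrightarrow> r *\<^sub>R x \<in> M" and v: "v \<notin> M"
  shows "\<exists>u::'a \<Rightarrow> real. bounded_linear u \<and> (\<forall>m\<in>M. u m = 0) \<and> u v = 1"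
proof -
  define d where "d = infdist v M"
  have d: "d > 0" unfolding d_def using infdist_pos_not_in_closed[OF cl _ v] M0 by auto
  define C where "C = 1/d"
  have C: "C \<ge> 0" using d C_def by simp
  define G0 where "G0 = {(m + t *\<^sub>R v, t) | m t. m \<in> M}"
  have vM: "t1 = t2" if "m1 + t1 *\<^sub>R v = m2 + t2 *\<^sub>R v" "m1\<in>M" "m2\<in>M" for m1 m2 t1 t2
  proof (rule ccontr)
    assume ne: "t1 \<noteq> t2"
    have "m2 - m1 = (t1 - t2) *\<^sub>R v" using that(1) by (simp add: algebra_simps)
    hence "v = (1/(t1-t2)) *\<^sub>R (m2 + (-1) *\<^sub>R m1)" using ne by simp
    moreover have "(1/(t1-t2)) *\<^sub>R (m2 + (-1) *\<^sub>R m1) \<in> M" using Msc Madd that by blast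
    ultimately show False using v by simp
  qed
  have "hbgood C G0 G0"
    unfolding hbgood_def
  proof (intro conjI allI impI)
    show "G0 \<subseteq> G0" by simp
  next
    fix x a b assume "(x,a)\<in>G0" "(x,b)\<in>G0"
    thus "a = b" unfolding G0_def using vM by auto
  next
    fix x a y b assume A: "(x,a)\<in>G0" "(y,b)\<in>G0"
    then obtain m1 m2 where "x = m1 + a *\<^sub>R v" "y = m2 + b *\<^sub>R v" "m1\<in>M" "m2\<in>M" unfolding G0_def by auto
    hence "x + y = (m1 + m2) + (a+b) *\<^sub>R v" "m1 + m2 \<in> M" using Madd by (auto simp: algebra_simps)
    thus "(x+y,a+b)\<in>G0" unfolding G0_def by blast
  next
    fix x a r assume A: "(x,a)\<in>G0"
    then obtain m1 where "x = m1 + a *\<^sub>R v" "m1\<in>M" unfolding G0_def by auto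
    hence "r *\<^sub>R x = r *\<^sub>R m1 + (r*a) *\<^sub>R v" "r *\<^sub>R m1 \<in> M" using Msc by (auto simp: algebra_simps)
    thus "(r *\<^sub>R x, r*a)\<in>G0" unfolding G0_def by blast
  next
    fix x a assume A: "(x,a)\<in>G0"
    then obtain m where m: "x = m + a *\<^sub>R v" "m\<in>M" unfolding G0_def by auto
    show "a \<le> C * norm x"
    proof (cases "a > 0")
      case False thus ?thesis using C by (smt (verit) norm_ge_zero mult_nonneg_nonneg)
    next
      case True
      have "(-(1/a)) *\<^sub>R m \<in> M" using Msc m by blast
      hence "d \<le> dist v ((-(1/a)) *\<^sub>R m)" unfolding d_def by (rule infdist_le)
      also have "dist v ((-(1/a)) *\<^sub>R m) = norm ((1/a) *\<^sub>R x)"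
        using True m by (simp add: dist_norm algebra_simps)
      also have "\<dots> = norm x / a" using True by simp
      finally have "d * a \<le> norm x" using True by (simp add: field_simps)
      hence "a \<le> norm x / d" using d by (simp add: field_simps)
      thus ?thesis using C_def by simp
    qed
  qed
  moreover have "G0 \<noteq> {}" using M0 unfolding G0_def by blast
  ultimately obtain G where G: "hbgood C G0 G" "Domain G = UNIV" using hb_graph[OF _ C] by blast
  have fn: "\<And>x a b. (x,a)\<in>G \<Longrightarrow> (x,b)\<in>G \<Longrightarrow> a=b"
    and add: "\<And>x a y b. (x,a)\<in>G \<Longrightarrow> (y,b)\<in>G \<Longrightarrow> (x+y,a+b)\<in>G"
    and sc: "\<And>x a r. (x,a)\<in>G \<Longrightarrow> (r *\<^sub>R x, r*a)\<in>G"
    and bd: "\<And>x a. (x,a)\<in>G \<Longrightarrow> a \<le> C * norm x"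
    and G0: "G0 \<subseteq> G" using G(1) unfolding hbgood_def by blast+
  define u where "u x = (THE a. (x,a)\<in>G)" for x
  have uG: "(x, u x) \<in> G" for x
  proof -
    obtain a where a: "(x,a)\<in>G" using G(2) by auto
    have "u x = a" unfolding u_def by (rule the_equality) (use a fn in blast)+
    thus ?thesis using a by simp
  qed
  have ueq: "u x = a" if "(x,a)\<in>G" for x a using fn[OF uG that] .
  have "bounded_linear u"
  proof (rule bounded_linear_intro[where K=C])
    show "u (x + y) = u x + u y" for x y using ueq[OF add[OF uG uG]] .
    show "u (r *\<^sub>R x) = r *\<^sub>R u x" for r x using ueq[OF sc[OF uG]] by simp
    show "norm (u x) \<le> norm x * C" for x
    proof -
      have "u x \<le> C * norm x" using bd[OF uG] .
      moreover have "u (-x) = - u x" using ueq[OF sc[OF uG, of "-1" x]] by simp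
      hence "- u x \<le> C * norm x" using bd[OF uG, of "-x"] by simp
      ultimately show ?thesis by (simp add: abs_le_iff mult.commute)
    qed
  qed
  moreover have "\<forall>m\<in>M. u m = 0"
  proof
    fix m assume "m\<in>M"
    hence "(m, 0) \<in> G0" unfolding G0_def by force
    thus "u m = 0" using ueq G0 by blast
  qed
  moreover have "u v = 1"
  proof -
    have "(v, 1) \<in> G0" unfolding G0_def using M0 by force
    thus ?thesis using ueq G0 by blast
  qed
  ultimately show ?thesis by (intro exI[of _ u]) simp
qed

lemma scaleC_decomp: "scaleC c (x::'a::complex_banach) = Re c *\<^sub>R x + Im c *\<^sub>R scaleC \<i> x"
proof -
  have "c = complex_of_real (Re c) + complex_of_real (Im c) * \<i>" by (simp add: complex_eq_iff)
  hence "scaleC c x = scaleC (complex_of_real (Re c)) x + scaleC (complex_of_real (Im c)) (scaleC \<i> x)"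
    using scaleC_add_left scaleC_scaleC by metis
  thus ?thesis by (simp only: scaleR_scaleC)
qed
lemma bounded_linear_scaleC: "bounded_linear (scaleC c :: 'a::complex_banach \<Rightarrow> 'a)"
proof (rule bounded_linear_intro[where K="cmod c"])
  show "scaleC c (x + y) = scaleC c x + scaleC c (y::'a)" for x y by (rule scaleC_add_right)
  show "scaleC c (r *\<^sub>R x) = r *\<^sub>R scaleC c (x::'a)" for r x
    unfolding scaleR_scaleC scaleC_scaleC by (simp only: mult.commute)
  show "norm (scaleC c x) \<le> norm (x::'a) * cmod c" for x by (simp add: norm_scaleC mult.commute)
qed

lemma hb_complex:
  fixes M :: "'a::complex_banach set"
  assumes M: "closed_csubspace M" and v: "v \<notin> M"
  shows "\<exists>h\<in>cdual. (\<forall>m\<in>M. h m = 0) \<and> h v \<noteq> 0"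
proof -
  have cl: "closed M" and M0: "0\<in>M" and Madd: "\<And>x y. x\<in>M \<Longrightarrow> y\<in>M \<Longrightarrow> x+y\<in>M"
    and MC: "\<And>c x. x\<in>M \<Longrightarrow> scaleC c x \<in> M"
    using M unfolding closed_csubspace_def csubspace_def by blast+
  have Msc: "\<And>r x. x\<in>M \<Longrightarrow> r *\<^sub>R x \<in> M" using MC by (simp add: scaleR_scaleC)
  obtain u :: "'a \<Rightarrow> real" where u: "bounded_linear u" "\<forall>m\<in>M. u m = 0" "u v = 1"
    using hb_real[OF cl M0 Madd Msc v] by blast
  interpret u: bounded_linear u by fact
  define h where "h x = complex_of_real (u x) - \<i> * complex_of_real (u (scaleC \<i> x))" for x
  have bl: "bounded_linear h"
  proof -
    have 1: "bounded_linear (\<lambda>x. complex_of_real (u x))"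
      using bounded_linear_compose[OF bounded_linear_of_real u(1)] by (simp add: o_def)
    have 2: "bounded_linear (\<lambda>x. complex_of_real (u (scaleC \<i> x)))"
      using bounded_linear_compose[OF 1 bounded_linear_scaleC[of \<i>]] by (simp add: o_def)
    show ?thesis unfolding h_def by (intro bounded_linear_sub 1 bounded_linear_const_mult 2)
  qed
  have uC: "u (scaleC c x) = Re c * u x + Im c * u (scaleC \<i> x)" for c x
    by (subst scaleC_decomp) (simp add: u.add u.scale)
  have hom: "h (scaleC c x) = c * h x" for c x
  proof -
    have "u (scaleC \<i> (scaleC c x)) = u (scaleC (\<i> * c) x)" by (simp add: scaleC_scaleC)
    also have "\<dots> = - Im c * u x + Re c * u (scaleC \<i> x)" using uC[of "\<i> * c" x] by simp
    finally have 1: "u (scaleC \<i> (scaleC c x)) = - Im c * u x + Re c * u (scaleC \<i> x)" .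
    have 2: "u (scaleC c x) = Re c * u x + Im c * u (scaleC \<i> x)" by (rule uC)
    show ?thesis unfolding h_def 1 2
      by (simp add: complex_eq_iff ring_distribs)
  qed
  have "h \<in> cdual" unfolding cdual_def using bl hom by blast
  moreover have "\<forall>m\<in>M. h m = 0" unfolding h_def using u(2) MC by simp
  moreover have "h v \<noteq> 0" unfolding h_def using u(3) by (simp add: complex_eq_iff)
  ultimately show ?thesis by blast
qed

lemma interp:
  fixes S :: "('i \<Rightarrow> complex) set" and p :: "'i \<Rightarrow> complex"
  assumes "finite F" "(\<lambda>i. 0) \<in> S" "\<forall>s\<in>S. \<forall>t\<in>S. (\<lambda>i. s i + t i) \<in> S" "\<forall>s\<in>S. \<forall>c. (\<lambda>i. c * s i) \<in> S"
    and "\<forall>c. (\<forall>s\<in>S. (\<Sum>i\<in>F. c i * s i) = 0) \<longrightarrow> (\<Sum>i\<in>F. c i * p i) = 0"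
  shows "\<exists>s\<in>S. \<forall>i\<in>F. s i = p i"
  using assms
proof (induction F arbitrary: S p rule: finite_induct)
  case empty thus ?case by auto
next
  case (insert j F)
  note S0 = insert.prems(1) and Sadd = insert.prems(2) and Ssc = insert.prems(3) and hyp = insert.prems(4)
  have Sdiff: "(\<lambda>i. s i - a * t i) \<in> S" if "s\<in>S" "t\<in>S" for s t a
  proof -
    have "(\<lambda>i. (- a) * t i) \<in> S" using Ssc that by blast
    from Sadd[rule_format, OF that(1) this] show ?thesis by simp
  qed
  show ?case
  proof (cases "\<exists>s0\<in>S. s0 j \<noteq> 0")
    case True
    then obtain s0 where s0: "s0 \<in> S" "s0 j \<noteq> 0" by blast
    define S' where "S' = {s\<in>S. s j = 0}"
    define \<mu> where "\<mu> = p j / s0 j"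
    define p' where "p' = (\<lambda>i. p i - \<mu> * s0 i)"
    have "\<exists>s\<in>S'. \<forall>i\<in>F. s i = p' i"
    proof (rule insert.IH)
      show "(\<lambda>i. 0) \<in> S'" using S0 unfolding S'_def by simp
      show "\<forall>s\<in>S'. \<forall>t\<in>S'. (\<lambda>i. s i + t i) \<in> S'" using Sadd unfolding S'_def by auto
      show "\<forall>s\<in>S'. \<forall>c. (\<lambda>i. c * s i) \<in> S'" using Ssc unfolding S'_def by auto
      show "\<forall>c. (\<forall>s\<in>S'. (\<Sum>i\<in>F. c i * s i) = 0) \<longrightarrow> (\<Sum>i\<in>F. c i * p' i) = 0"
      proof (intro allI impI)
        fix c assume c: "\<forall>s\<in>S'. (\<Sum>i\<in>F. c i * s i) = 0"
        define c' where "c' = c(j := - (\<Sum>i\<in>F. c i * s0 i) / s0 j)"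
        have sumF: "(\<Sum>i\<in>F. c' i * q i) = (\<Sum>i\<in>F. c i * q i)" for q
          unfolding c'_def using insert.hyps(2) by (intro sum.cong) auto
        have "\<forall>s\<in>S. (\<Sum>i\<in>insert j F. c' i * s i) = 0"
        proof
          fix s assume s: "s \<in> S"
          define lam where "lam = s j / s0 j"
          have inS': "(\<lambda>i. s i - lam * s0 i) \<in> S'" unfolding S'_def using Sdiff[OF s s0(1), of lam] s0(2) lam_def by simp
          have "(\<Sum>i\<in>F. c i * (s i - lam * s0 i)) = 0" using c[rule_format, OF inS'] by simp
          hence e: "(\<Sum>i\<in>F. c i * s i) = lam * (\<Sum>i\<in>F. c i * s0 i)"
            by (simp add: algebra_simps sum_subtractf sum_distrib_left)
          have "(\<Sum>i\<in>insert j F. c' i * s i) = c' j * s j + (\<Sum>i\<in>F. c i * s i)"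
            using insert.hyps by (simp add: sumF)
          also have "\<dots> = 0" unfolding e using s0(2) by (simp add: c'_def lam_def field_simps)
          finally show "(\<Sum>i\<in>insert j F. c' i * s i) = 0" .
        qed
        hence "(\<Sum>i\<in>insert j F. c' i * p i) = 0" using hyp by blast
        hence e2: "c' j * p j + (\<Sum>i\<in>F. c i * p i) = 0" using insert.hyps by (simp add: sumF)
        have "(\<Sum>i\<in>F. c i * p' i) = (\<Sum>i\<in>F. c i * p i) - \<mu> * (\<Sum>i\<in>F. c i * s0 i)"
          unfolding p'_def by (simp add: algebra_simps sum_subtractf sum_distrib_left)
        also have "\<dots> = (\<Sum>i\<in>F. c i * p i) + c' j * p j"
          unfolding \<mu>_def c'_def using s0(2) by (simp add: field_simps)
        finally show "(\<Sum>i\<in>F. c i * p' i) = 0" using e2 by (simp add: add.commute)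
      qed
    qed
    then obtain s' where s': "s' \<in> S" "s' j = 0" "\<forall>i\<in>F. s' i = p' i" unfolding S'_def by blast
    have "(\<lambda>i. s' i + \<mu> * s0 i) \<in> S" using Sadd[rule_format, OF s'(1) Ssc[rule_format, OF s0(1)]] by simp
    moreover have "\<forall>i\<in>insert j F. s' i + \<mu> * s0 i = p i"
      using s' s0(2) unfolding p'_def \<mu>_def by auto
    ultimately show ?thesis by (intro bexI[of _ "(\<lambda>i. s' i + \<mu> * s0 i)"]) auto
  next
    case False
    hence z: "\<forall>s\<in>S. s j = 0" by blast
    define e where "e = (\<lambda>i. if i = j then (1::complex) else 0)"
    have es: "(\<Sum>i\<in>insert j F. e i * s i) = s j" for s
      using insert.hyps unfolding e_def by (simp add: sum.neutral)
    have "\<forall>s\<in>S. (\<Sum>i\<in>insert j F. e i * s i) = 0" using es z by simp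
    from mp[OF spec[OF hyp, of e] this] es[of p] have pj: "p j = 0" by simp
    have "\<exists>s\<in>S. \<forall>i\<in>F. s i = p i"
    proof (rule insert.IH[OF S0 Sadd Ssc], intro allI impI)
      fix c assume c: "\<forall>s\<in>S. (\<Sum>i\<in>F. c i * s i) = 0"
      have eq: "(\<Sum>i\<in>insert j F. (c(j:=0)) i * q i) = (\<Sum>i\<in>F. c i * q i)" for q
        using insert.hyps by (simp, intro sum.cong) auto
      have "\<forall>s\<in>S. (\<Sum>i\<in>insert j F. (c(j:=0)) i * s i) = 0" using eq c by simp
      from mp[OF spec[OF hyp, of "c(j:=0)"] this] eq[of p] show "(\<Sum>i\<in>F. c i * p i) = 0" by simp
    qed
    thus ?thesis using pj z by auto
  qed
qed

interpretation cvs: vector_space "scaleC :: complex \<Rightarrow> 'a::complex_banach \<Rightarrow> 'a"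
  by unfold_locales (auto simp: scaleC_add_right scaleC_add_left scaleC_scaleC scaleC_one)

lemma chain_max_finite:
  fixes \<N> :: "'a set set"
  assumes chain: "\<forall>E\<in>\<N>. \<forall>F\<in>\<N>. E \<subseteq> F \<or> F \<subseteq> E" and fin: "finite A"
    and each: "\<forall>a\<in>A. \<exists>E\<in>\<N>. a \<in> E \<and> Q E" and base: "E0 \<in> \<N>" "Q E0"
  shows "\<exists>E\<in>\<N>. A \<subseteq> E \<and> Q E"
  using fin each
proof (induction A rule: finite_induct)
  case empty thus ?case using base by blast
next
  case (insert a A)
  then obtain E1 where E1: "E1 \<in> \<N>" "A \<subseteq> E1" "Q E1" by blast
  obtain E2 where E2: "E2 \<in> \<N>" "a \<in> E2" "Q E2" using insert.prems by blast
  show ?case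
  proof (cases "E1 \<subseteq> E2")
    case True thus ?thesis using E1 E2 by blast
  next
    case False hence "E2 \<subseteq> E1" using chain E1 E2 by blast
    thus ?thesis using E1 E2 by blast
  qed
qed

lemma trace_zero:
  fixes \<N> :: "'a::complex_banach set set" and x :: "'i \<Rightarrow> 'a" and g :: "'i \<Rightarrow> 'a \<Rightarrow> complex"
  assumes I: "finite I"
    and N: "\<forall>E\<in>\<N>. cvs.subspace E"
    and chain: "\<forall>E\<in>\<N>. \<forall>F\<in>\<N>. E \<subseteq> F \<or> F \<subseteq> E"
    and N0: "{0} \<in> \<N>"
    and gadd: "\<forall>i\<in>I. \<forall>u w. g i (u + w) = g i u + g i w"
    and gsc: "\<forall>i\<in>I. \<forall>c w. g i (scaleC c w) = c * g i w"
    and B: "finite B" "cvs.independent B"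
    and xB: "\<forall>i\<in>I. x i \<in> cvs.span B"
    and P: "\<forall>y\<in>cvs.span B. y \<noteq> 0 \<longrightarrow> (\<exists>E\<in>\<N>. y \<notin> E \<and> (\<Sum>i\<in>I. scaleC (g i y) (x i)) \<in> E)"
  shows "(\<Sum>i\<in>I. g i (x i)) = 0"
  using B xB P
proof (induction "card B" arbitrary: B x rule: less_induct)
  case less
  note Bfin = less.prems(1) and Bind = less.prems(2) and xB = less.prems(3) and P = less.prems(4)
  have g0: "g i 0 = 0" if "i\<in>I" for i using gadd that by (metis add_cancel_right_right)
  show ?case
  proof (cases "B = {}")
    case True
    hence "x i = 0" if "i\<in>I" for i using xB that by simp
    thus ?thesis using g0 by simp
  next
    case Bne: False
    define U where "U = cvs.span B"
    define K where "K y = (\<Sum>i\<in>I. scaleC (g i y) (x i))" for y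
    define Z where "Z = \<Union>{U \<inter> E | E. E \<in> \<N> \<and> \<not> U \<subseteq> E}"
    have Usub: "cvs.subspace U" unfolding U_def by simp
    obtain b0 where b0: "b0 \<in> B" using Bne by blast
    have "b0 \<noteq> 0" using b0 Bind cvs.dependent_zero by blast
    hence U0: "\<not> U \<subseteq> {0}" unfolding U_def using cvs.span_base[OF b0] by blast
    have Zsub: "cvs.subspace Z"
      unfolding cvs.subspace_def
    proof (intro conjI ballI allI)
      show "0 \<in> Z" unfolding Z_def using N0 U0 cvs.span_zero U_def by blast
    next
      fix u w assume "u \<in> Z" "w \<in> Z"
      then obtain E1 E2 where E: "E1\<in>\<N>" "\<not> U \<subseteq> E1" "u\<in>U" "u\<in>E1" "E2\<in>\<N>" "\<not> U \<subseteq> E2" "w\<in>U" "w\<in>E2"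
        unfolding Z_def by blast
      have sE: "cvs.subspace E1" "cvs.subspace E2" using N E by auto
      have "u + w \<in> U" using E Usub cvs.subspace_add by blast
      moreover have "u + w \<in> E1 \<or> u + w \<in> E2"
        using chain E sE cvs.subspace_add by (metis subsetD)
      ultimately show "u + w \<in> Z" unfolding Z_def using E by blast
    next
      fix c u assume "u \<in> Z"
      then obtain E1 where E: "E1\<in>\<N>" "\<not> U \<subseteq> E1" "u\<in>U" "u\<in>E1" unfolding Z_def by blast
      have "scaleC c u \<in> U" "scaleC c u \<in> E1" using E N Usub cvs.subspace_scale by blast+
      thus "scaleC c u \<in> Z" unfolding Z_def using E by blast
    qed
    have ZU: "Z \<subseteq> U" unfolding Z_def by blast
    have ZneU: "\<not> U \<subseteq> Z"
    proof
      assume UZ: "U \<subseteq> Z"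
      have "\<forall>a\<in>B. \<exists>E\<in>\<N>. a \<in> E \<and> \<not> U \<subseteq> E"
      proof
        fix a assume "a \<in> B"
        hence "a \<in> Z" using UZ cvs.span_base U_def by blast
        thus "\<exists>E\<in>\<N>. a \<in> E \<and> \<not> U \<subseteq> E" unfolding Z_def by blast
      qed
      then obtain E where E: "E \<in> \<N>" "B \<subseteq> E" "\<not> U \<subseteq> E"
        using chain_max_finite[OF chain Bfin _ N0, of "\<lambda>E. \<not> U \<subseteq> E"] U0 by blast
      have "U \<subseteq> E" unfolding U_def using E N cvs.span_minimal by blast
      thus False using E by blast
    qed
    obtain C where C: "C \<subseteq> Z" "cvs.independent C" "Z \<subseteq> cvs.span C"
      using cvs.maximal_independent_subset[of Z] by blast
    have CU: "C \<subseteq> U" using C ZU by blast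
    obtain B' where B': "C \<subseteq> B'" "B' \<subseteq> U" "cvs.independent B'" "U \<subseteq> cvs.span B'"
      using cvs.maximal_independent_subset_extend[OF CU C(2)] by blast
    have B'fin: "finite B'" and B'card: "card B' \<le> card B"
      using cvs.independent_span_bound[OF Bfin B'(3)] B'(2) U_def by auto
    have spanC: "cvs.span C \<subseteq> Z" using C(1) Zsub cvs.span_minimal by blast
    obtain b where b: "b \<in> B'" "b \<notin> C"
    proof -
      have "\<not> B' \<subseteq> C"
      proof
        assume "B' \<subseteq> C"
        hence "U \<subseteq> cvs.span C" using B'(4) cvs.span_mono by blast
        thus False using spanC ZneU by blast
      qed
      thus ?thesis using that by blast
    qed
    define B'' where "B'' = B' - {b}"
    define U' where "U' = cvs.span B''"
    have bU': "b \<notin> U'" unfolding U'_def B''_def using B'(3) b(1) cvs.dependent_def by blast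
    have ZU': "Z \<subseteq> U'" unfolding U'_def B''_def
      using C(3) cvs.span_mono[of C "B' - {b}"] B'(1) b(2) by blast
    have U'U: "U' \<subseteq> U" unfolding U'_def B''_def using B'(2) Usub cvs.span_minimal by blast
    have Uins: "U \<subseteq> cvs.span (insert b B'')" unfolding B''_def using B'(4) b(1)
      by (simp add: insert_absorb)
    have "\<forall>i\<in>I. \<exists>a. x i - scaleC a b \<in> U'"
    proof
      fix i assume "i \<in> I"
      hence "x i \<in> U" using xB U_def by blast
      thus "\<exists>a. x i - scaleC a b \<in> U'" using Uins cvs.span_insert U'_def by blast
    qed
    then obtain a where a: "\<forall>i\<in>I. x i - scaleC (a i) b \<in> U'" by metis
    define w where "w i = x i - scaleC (a i) b" for i
    have xw: "x i = w i + scaleC (a i) b" for i unfolding w_def by simp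
    define K' where "K' y = (\<Sum>i\<in>I. scaleC (g i y) (w i))" for y
    define al where "al y = (\<Sum>i\<in>I. g i y * a i)" for y
    have Kdec: "K y = K' y + scaleC (al y) b" for y
      unfolding K_def K'_def al_def xw
      by (simp add: cvs.scale_right_distrib sum.distrib cvs.scale_sum_left)
    have KZ: "K y \<in> Z" if "y \<in> U" for y
    proof (cases "y = 0")
      case True
      have "K y = 0" unfolding K_def True using g0 by simp
      thus ?thesis using Zsub cvs.subspace_0 by simp
    next
      case False
      have "\<exists>E\<in>\<N>. y \<notin> E \<and> K y \<in> E" unfolding K_def using P[rule_format, of y] that False U_def by simp
      then obtain E where E: "E\<in>\<N>" "y \<notin> E" "K y \<in> E" by blast
      have "K y \<in> U" unfolding K_def U_def
        using xB by (intro cvs.span_sum cvs.span_scale) auto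
      thus ?thesis unfolding Z_def using E that by blast
    qed
    have wU': "w i \<in> cvs.span B''" if "i \<in> I" for i using a that unfolding w_def U'_def by blast
    have K'U': "K' y \<in> U'" for y unfolding K'_def U'_def
      using wU' by (intro cvs.span_sum cvs.span_scale) auto
    have al0: "al y = 0" and KK': "K y = K' y" if "y \<in> U" for y
    proof -
      have "K' y + scaleC (al y) b \<in> U'" using KZ[OF that] ZU' Kdec by auto
      hence "scaleC (al y) b \<in> U'" using K'U'[of y] cvs.span_add_eq U'_def by blast
      hence "scaleC (inverse (al y)) (scaleC (al y) b) \<in> U'" using cvs.span_scale U'_def by blast
      note inv = this
      show al: "al y = 0"
      proof (rule ccontr)
        assume ne: "al y \<noteq> 0"
        have "scaleC (inverse (al y)) (scaleC (al y) b) = b" using ne by (simp add: scaleC_scaleC scaleC_one)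
        thus False using inv bU' by simp
      qed
      show "K y = K' y" using Kdec al by simp
    qed
    have IH: "(\<Sum>i\<in>I. g i (w i)) = 0"
    proof (rule less.hyps[of B'' w])
      have c1: "card B'' = card B' - 1" unfolding B''_def using B'fin b(1) by simp
      have c2: "0 < card B'" using B'fin b(1) card_gt_0_iff by blast
      show "card B'' < card B" using c1 c2 B'card by linarith
      show "finite B''" unfolding B''_def using B'fin by simp
      show "cvs.independent B''" unfolding B''_def using B'(3) cvs.independent_mono by blast
      show "\<forall>i\<in>I. w i \<in> cvs.span B''" using a w_def U'_def by simp
      show "\<forall>y\<in>cvs.span B''. y \<noteq> 0 \<longrightarrow> (\<exists>E\<in>\<N>. y \<notin> E \<and> (\<Sum>i\<in>I. scaleC (g i y) (w i)) \<in> E)"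
      proof (intro ballI impI)
        fix y assume y: "y \<in> cvs.span B''" "y \<noteq> 0"
        hence yU: "y \<in> U" using U'U U'_def by blast
        hence "y \<in> cvs.span B" using U_def by simp
        hence "\<exists>E\<in>\<N>. y \<notin> E \<and> K y \<in> E" unfolding K_def using P[rule_format, of y] y(2) by simp
        then obtain E where "E\<in>\<N>" "y \<notin> E" "K y \<in> E" by blast
        thus "\<exists>E\<in>\<N>. y \<notin> E \<and> (\<Sum>i\<in>I. scaleC (g i y) (w i)) \<in> E"
          using KK'[OF yU] K'_def by auto
      qed
    qed
    have bU: "b \<in> U" using B'(2) b(1) by blast
    have "(\<Sum>i\<in>I. g i (x i)) = (\<Sum>i\<in>I. g i (w i)) + al b"
      unfolding al_def xw using gadd gsc by (simp add: sum.distrib mult.commute)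
    thus ?thesis using IH al0[OF bU] by simp
  qed
qed

lemma csubspace_cvs: "csubspace M = cvs.subspace M"
  unfolding csubspace_def cvs.subspace_def by blast

lemma cspan_cvs: "cspan A = cvs.span A"
proof
  show "cspan A \<subseteq> cvs.span A" unfolding cspan_def
    using csubspace_cvs cvs.subspace_span cvs.span_superset by blast
  show "cvs.span A \<subseteq> cspan A" unfolding cspan_def
    using csubspace_cvs cvs.span_minimal by blast
qed

lemma cspan_minimal: "csubspace M \<Longrightarrow> A \<subseteq> M \<Longrightarrow> cspan A \<subseteq> M"
  unfolding cspan_def by blast

lemma cspan_superset: "A \<subseteq> cspan A"
  unfolding cspan_def by blast

lemma cdual_bl: "h \<in> cdual \<Longrightarrow> bounded_linear h" unfolding cdual_def by blast
lemma cdual_add: assumes "h \<in> cdual" shows "h (x + y) = h x + h y"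
proof -
  interpret bounded_linear h using cdual_bl[OF assms] .
  show ?thesis by (rule add)
qed
lemma cdual_scaleC: "h \<in> cdual \<Longrightarrow> h (scaleC c x) = c * h x" unfolding cdual_def by blast
lemma cdual_zero: assumes "h \<in> cdual" shows "h 0 = 0"
proof -
  interpret bounded_linear h using cdual_bl[OF assms] .
  show ?thesis by (rule zero)
qed
lemma cdual_sum: "h \<in> cdual \<Longrightarrow> h (\<Sum>i\<in>I. scaleC (a i) (v i)) = (\<Sum>i\<in>I. a i * h (v i))"
proof (induction I rule: infinite_finite_induct)
  case (infinite A) thus ?case by (simp add: cdual_zero)
next
  case empty thus ?case by (simp add: cdual_zero)
next
  case (insert i I) thus ?case by (simp add: cdual_add cdual_scaleC)
qed

lemma bops_scaleC: "T \<in> bops \<Longrightarrow> blinfun_apply T (scaleC c x) = scaleC c (blinfun_apply T x)"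
  unfolding bops_def by blast

definition phi :: "('a::complex_banach \<Rightarrow>\<^sub>L 'a) \<Rightarrow> ('a \<times> ('a \<Rightarrow> complex)) \<Rightarrow> complex" where
  "phi T i = (if snd i \<in> cdual then snd i (blinfun_apply T (fst i)) else 0)"

lemma wot_eq: "wot = pullback_topology UNIV phi (product_topology (\<lambda>_. euclidean) UNIV)"
proof -
  have "(\<lambda>T. \<lambda>(x, f). if f \<in> cdual then f (blinfun_apply T x) else 0) = phi"
    by (auto simp: phi_def fun_eq_iff)
  thus ?thesis unfolding wot_def by (rule arg_cong)
qed

definition r1 :: "('a::complex_banach \<Rightarrow> complex) \<Rightarrow> 'a \<Rightarrow> ('a \<Rightarrow>\<^sub>L 'a)" where
  "r1 h y = Blinfun (\<lambda>z. scaleC (h z) y)"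

lemma r1_bl: assumes "h \<in> cdual" shows "bounded_linear (\<lambda>z. scaleC (h z) (y::'a::complex_banach))"
proof -
  have bl: "bounded_linear h" using cdual_bl[OF assms] .
  interpret hh: bounded_linear h by fact
  obtain Kh where Kh: "\<And>x. norm (h x) \<le> norm x * Kh" using bounded_linear.bounded[OF bl] by blast
  show ?thesis
  proof (rule bounded_linear_intro[where K="Kh * norm y"])
    show "scaleC (h (x + z)) y = scaleC (h x) y + scaleC (h z) y" for x z
      by (simp add: hh.add scaleC_add_left)
    show "scaleC (h (r *\<^sub>R x)) y = r *\<^sub>R scaleC (h x) y" for r x
    proof -
      have e: "h (r *\<^sub>R x) = of_real r * h x" by (simp add: hh.scale scaleR_conv_of_real)
      show ?thesis unfolding e scaleR_scaleC[of r "scaleC (h x) y"] by (simp only: scaleC_scaleC)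
    qed
    show "norm (scaleC (h x) y) \<le> norm x * (Kh * norm y)" for x
      using Kh[of x] by (simp add: norm_scaleC mult.assoc[symmetric] mult_right_mono)
  qed
qed

lemma r1_apply: assumes "h \<in> cdual" shows "blinfun_apply (r1 h y) z = scaleC (h z) y"
proof -
  have "blinfun_apply (Blinfun (\<lambda>z. scaleC (h z) y)) = (\<lambda>z. scaleC (h z) y)"
    by (rule bounded_linear_Blinfun_apply[OF r1_bl[OF assms]])
  thus ?thesis unfolding r1_def by (rule fun_cong)
qed

lemma r1_bops: "h \<in> cdual \<Longrightarrow> r1 h y \<in> bops"
  unfolding bops_def by (simp add: r1_apply cdual_scaleC scaleC_scaleC)

lemma join_sub:
  assumes "nest \<E>" "E \<in> \<E>" "y \<in> E"
  shows "subspace_join {E'\<in>\<E>. y \<notin> E'} \<subseteq> E"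
proof -
  have n: "\<forall>E\<in>\<E>. closed_csubspace E" "\<forall>E\<in>\<E>. \<forall>F\<in>\<E>. E \<subseteq> F \<or> F \<subseteq> E"
    using assms(1) unfolding nest_def by blast+
  have "\<Union>{E'\<in>\<E>. y \<notin> E'} \<subseteq> E" using n(2) assms(2,3) by blast
  hence "cspan (\<Union>{E'\<in>\<E>. y \<notin> E'}) \<subseteq> E"
    using cspan_minimal n(1) assms(2) unfolding closed_csubspace_def by blast
  moreover have "closed E" using n(1) assms(2) unfolding closed_csubspace_def by blast
  ultimately show ?thesis unfolding subspace_join_def by (rule closure_minimal)
qed

lemma join_in: assumes "nest \<E>" shows "subspace_join {E'\<in>\<E>. y \<notin> E'} \<in> \<E>"
proof -
  have "\<forall>S\<subseteq>\<E>. subspace_join S \<in> \<E>" using assms unfolding nest_def by (elim conjE)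
  thus ?thesis by (rule allE[where x="{E'\<in>\<E>. y \<notin> E'}"]) auto
qed

lemma r1_nest:
  assumes "nest \<E>" "h \<in> cdual" and hM: "\<forall>m\<in>subspace_join {E'\<in>\<E>. y \<notin> E'}. h m = 0"
  shows "r1 h y \<in> nest_alg \<E>"
proof -
  have n: "\<forall>E\<in>\<E>. closed_csubspace E" using assms(1) unfolding nest_def by blast
  have "blinfun_apply (r1 h y) z \<in> E" if "E \<in> \<E>" "z \<in> E" for E z
  proof (cases "y \<in> E")
    case True thus ?thesis using n that r1_apply[OF assms(2)]
      unfolding closed_csubspace_def csubspace_def by simp
  next
    case False
    hence "E \<subseteq> \<Union>{E'\<in>\<E>. y \<notin> E'}" using that(1) by blast
    also have "\<dots> \<subseteq> cspan (\<Union>{E'\<in>\<E>. y \<notin> E'})" by (rule cspan_superset)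
    also have "\<dots> \<subseteq> closure (cspan (\<Union>{E'\<in>\<E>. y \<notin> E'}))" by (rule closure_subset)
    finally have "E \<subseteq> subspace_join {E'\<in>\<E>. y \<notin> E'}" unfolding subspace_join_def .
    hence "h z = 0" using hM that(2) by blast
    thus ?thesis using r1_apply[OF assms(2)] n that unfolding closed_csubspace_def csubspace_def by simp
  qed
  thus ?thesis unfolding nest_alg_def using r1_bops[OF assms(2)] by blast
qed

lemma scaleC_tendsto:
  assumes "(a \<longlongrightarrow> l) F" shows "((\<lambda>n. scaleC (a n) (v::'a::complex_banach)) \<longlongrightarrow> scaleC l v) F"
proof -
  have "((\<lambda>n. Re (a n) *\<^sub>R v + Im (a n) *\<^sub>R scaleC \<i> v) \<longlongrightarrow> Re l *\<^sub>R v + Im l *\<^sub>R scaleC \<i> v) F"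
    by (intro tendsto_intros assms)
  thus ?thesis by (simp only: scaleC_decomp[symmetric])
qed

lemma annih:
  fixes \<E> :: "'a::complex_banach set set" and J :: "('a \<Rightarrow>\<^sub>L 'a) set"
  assumes nest: "nest \<E>" and bim: "bimodule (nest_alg \<E>) J" and TJ: "T \<in> J" and F: "finite F"
    and c: "\<forall>R\<in>J. finite_rank R \<longrightarrow> (\<Sum>i\<in>F. c i * phi R i) = 0"
  shows "(\<Sum>i\<in>F. c i * phi T i) = 0"
proof -
  have n: "\<forall>E\<in>\<E>. closed_csubspace E" "\<forall>E\<in>\<E>. \<forall>F\<in>\<E>. E \<subseteq> F \<or> F \<subseteq> E" "{0} \<in> \<E>"
    using nest unfolding nest_def by blast+
  have Jb: "J \<subseteq> bops" and Jmod: "\<forall>A\<in>nest_alg \<E>. \<forall>T\<in>J. A o\<^sub>L T \<in> J \<and> T o\<^sub>L A \<in> J"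
    using bim unfolding bimodule_def by blast+
  have Tb: "T \<in> bops" using Jb TJ by blast
  define F' where "F' = {i\<in>F. snd i \<in> cdual}"
  have F': "finite F'" using F F'_def by simp
  have sumF: "(\<Sum>i\<in>F. c i * phi R i) = (\<Sum>i\<in>F'. c i * snd i (blinfun_apply R (fst i)))" for R
  proof -
    have "c i * phi R i = (if snd i \<in> cdual then c i * snd i (blinfun_apply R (fst i)) else 0)" for i
      by (simp add: phi_def)
    hence "(\<Sum>i\<in>F. c i * phi R i) = (\<Sum>i\<in>F. if snd i \<in> cdual then c i * snd i (blinfun_apply R (fst i)) else 0)"
      by simp
    also have "\<dots> = (\<Sum>i\<in>F'. c i * snd i (blinfun_apply R (fst i)))"
      unfolding F'_def using F by (simp add: sum.inter_filter)
    finally show ?thesis .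
  qed
  define g where "g i z = c i * snd i (blinfun_apply T z)" for i z
  define K where "K z = (\<Sum>i\<in>F'. scaleC (g i z) (fst i))" for z
  define M where "M y = subspace_join {E'\<in>\<E>. y \<notin> E'}" for y
  have Mn: "M y \<in> \<E>" for y unfolding M_def using join_in[OF nest] .
  have Mcs: "closed_csubspace (M y)" for y using Mn n(1) by blast
  have KM: "K y \<in> M y" for y
  proof (rule ccontr)
    assume "K y \<notin> M y"
    then obtain h where h: "h \<in> cdual" "\<forall>m\<in>M y. h m = 0" "h (K y) \<noteq> 0" using hb_complex[OF Mcs] by blast
    have A: "r1 h y \<in> nest_alg \<E>" using r1_nest[OF nest h(1)] h(2) M_def by simp
    define R where "R = T o\<^sub>L r1 h y"
    have RJ: "R \<in> J" using Jmod A TJ R_def by blast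
    have Rap: "blinfun_apply R z = scaleC (h z) (blinfun_apply T y)" for z
      unfolding R_def using r1_apply[OF h(1)] bops_scaleC[OF Tb] by simp
    have "finite_rank R" unfolding finite_rank_def
    proof (intro exI conjI)
      show "finite {blinfun_apply T y}" by simp
      show "range (blinfun_apply R) \<subseteq> cspan {blinfun_apply T y}"
        unfolding cspan_cvs using Rap by (auto intro: cvs.span_scale cvs.span_base)
    qed
    hence "(\<Sum>i\<in>F. c i * phi R i) = 0" using c RJ by blast
    hence "(\<Sum>i\<in>F'. c i * snd i (blinfun_apply R (fst i))) = 0" unfolding sumF .
    moreover have "(\<Sum>i\<in>F'. c i * snd i (blinfun_apply R (fst i))) = h (K y)"
    proof -
      have "(\<Sum>i\<in>F'. c i * snd i (blinfun_apply R (fst i))) = (\<Sum>i\<in>F'. g i y * h (fst i))"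
        unfolding Rap g_def by (intro sum.cong refl) (simp add: F'_def cdual_scaleC)
      also have "\<dots> = h (K y)" unfolding K_def by (rule cdual_sum[OF h(1), where a="\<lambda>i. g i y" and I=F' and v=fst, symmetric])
      finally show ?thesis .
    qed
    ultimately show False using h(3) by simp
  qed
  define V where "V = cvs.span (fst ` F')"
  have KV: "K z \<in> V" for z unfolding K_def V_def
    by (intro cvs.span_sum cvs.span_scale cvs.span_base) auto
  have glin: "bounded_linear (\<lambda>z. snd i (blinfun_apply T z))" if "i \<in> F'" for i
  proof -
    have "snd i \<in> cdual" using that F'_def by simp
    from bounded_linear_compose[OF cdual_bl[OF this] blinfun.bounded_linear_right]
    show ?thesis .
  qed
  have Kcont: "((\<lambda>n. K (s n)) \<longlongrightarrow> K y) sequentially" if "(s \<longlongrightarrow> y) sequentially" for s y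
    unfolding K_def g_def
    by (intro tendsto_sum scaleC_tendsto tendsto_mult_left bounded_linear.tendsto[OF glin] that)
  have P: "\<exists>E\<in>\<E>. y \<notin> E \<and> K y \<in> E" if y0: "y \<noteq> 0" for y
  proof (cases "y \<in> M y")
    case False thus ?thesis using Mn KM by blast
  next
    case True
    define W where "W = \<Union>{E'\<in>\<E>. y \<notin> E'}"
    have Ws: "csubspace W"
      unfolding csubspace_def
    proof (intro conjI ballI allI)
      show "0 \<in> W" unfolding W_def using n(3) y0 by blast
    next
      fix u w assume "u \<in> W" "w \<in> W"
      then obtain E1 E2 where E: "E1\<in>\<E>" "y \<notin> E1" "u\<in>E1" "E2\<in>\<E>" "y\<notin>E2" "w\<in>E2" unfolding W_def by blast
      have "u + w \<in> E1 \<or> u + w \<in> E2" using n(1,2) E unfolding closed_csubspace_def csubspace_def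
        by (metis subsetD)
      thus "u + w \<in> W" unfolding W_def using E by blast
    next
      fix a u assume "u \<in> W"
      then obtain E1 where E: "E1\<in>\<E>" "y \<notin> E1" "u\<in>E1" unfolding W_def by blast
      hence "scaleC a u \<in> E1" using n(1) unfolding closed_csubspace_def csubspace_def by blast
      thus "scaleC a u \<in> W" unfolding W_def using E by blast
    qed
    have MW: "M y = closure W"
    proof -
      have "cspan W = W" unfolding cspan_cvs using Ws csubspace_cvs cvs.span_eq_iff by blast
      thus ?thesis unfolding M_def subspace_join_def W_def by simp
    qed
    define Z where "Z = V \<inter> W"
    have Zs: "cvs.subspace Z" unfolding Z_def V_def
      using Ws csubspace_cvs cvs.subspace_span[of "fst ` F'"] unfolding cvs.subspace_def by blast
    obtain C where C: "C \<subseteq> Z" "cvs.independent C" "Z \<subseteq> cvs.span C"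
      using cvs.maximal_independent_subset[of Z] by blast
    have Cfin: "finite C"
      using cvs.independent_span_bound[OF finite_imageI[OF F'] C(2)] C(1) Z_def V_def by blast
    have "\<forall>a\<in>C. \<exists>E\<in>\<E>. a \<in> E \<and> y \<notin> E" using C(1) unfolding Z_def W_def by blast
    then obtain E0 where E0: "E0 \<in> \<E>" "C \<subseteq> E0" "y \<notin> E0"
      using chain_max_finite[OF n(2) Cfin _ n(3), of "\<lambda>E. y \<notin> E"] y0 by blast
    have E0s: "cvs.subspace E0" "closed E0" using E0(1) n(1) csubspace_cvs unfolding closed_csubspace_def by blast+
    have ZE0: "Z \<subseteq> E0" using C(3) cvs.span_minimal[OF E0(2) E0s(1)] by blast
    have "y \<in> closure W" using True MW by simp
    then obtain s where s: "\<And>k. s k \<in> W" "(s \<longlongrightarrow> y) sequentially"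
      unfolding closure_sequential by blast
    have "K (s k) \<in> E0" for k
    proof -
      obtain Ek where Ek: "Ek \<in> \<E>" "y \<notin> Ek" "s k \<in> Ek" using s(1)[of k] unfolding W_def by blast
      have "K (s k) \<in> Ek" using KM[of "s k"] join_sub[OF nest Ek(1) Ek(3)] M_def by blast
      hence "K (s k) \<in> Z" unfolding Z_def W_def using KV Ek by blast
      thus ?thesis using ZE0 by blast
    qed
    hence "K y \<in> E0" using closed_sequentially[OF E0s(2) _ Kcont[OF s(2)]] by blast
    thus ?thesis using E0 by blast
  qed
  obtain B where B: "B \<subseteq> fst ` F'" "cvs.independent B" "fst ` F' \<subseteq> cvs.span B"
    using cvs.maximal_independent_subset[of "fst ` F'"] by blast
  have Bfin: "finite B" using B(1) F' finite_subset by blast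
  have gadd: "\<forall>i\<in>F'. \<forall>u w. g i (u + w) = g i u + g i w"
    unfolding g_def F'_def by (auto simp: blinfun.add_right cdual_add algebra_simps)
  have gsc: "\<forall>i\<in>F'. \<forall>a w. g i (scaleC a w) = a * g i w"
    unfolding g_def F'_def by (auto simp: bops_scaleC[OF Tb] cdual_scaleC)
  have Nsub: "\<forall>E\<in>\<E>. cvs.subspace E" using n(1) csubspace_cvs unfolding closed_csubspace_def by blast
  have "(\<Sum>i\<in>F'. g i (fst i)) = 0"
  proof (rule trace_zero[OF F' Nsub n(2) n(3) gadd gsc Bfin B(2)])
    show "\<forall>i\<in>F'. fst i \<in> cvs.span B" using B(3) by blast
    show "\<forall>y\<in>cvs.span B. y \<noteq> 0 \<longrightarrow> (\<exists>E\<in>\<E>. y \<notin> E \<and> (\<Sum>i\<in>F'. scaleC (g i y) (fst i)) \<in> E)"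
      using P unfolding K_def by blast
  qed
  thus ?thesis unfolding sumF g_def by simp
qed

lemma finite_rank_zero: "finite_rank 0"
  unfolding finite_rank_def using cspan_cvs cvs.span_zero by (intro exI[of _ "{}"]) auto

lemma finite_rank_add: "finite_rank R1 \<Longrightarrow> finite_rank R2 \<Longrightarrow> finite_rank (R1 + R2)"
proof -
  assume "finite_rank R1" "finite_rank R2"
  then obtain F1 F2 where F: "finite F1" "range (blinfun_apply R1) \<subseteq> cvs.span F1"
    "finite F2" "range (blinfun_apply R2) \<subseteq> cvs.span F2" unfolding finite_rank_def cspan_cvs by blast
  have "range (blinfun_apply (R1 + R2)) \<subseteq> cvs.span (F1 \<union> F2)"
  proof
    fix z assume "z \<in> range (blinfun_apply (R1 + R2))"
    then obtain x where x: "z = R1 x + R2 x" by (auto simp: plus_blinfun.rep_eq)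
    have "R1 x \<in> cvs.span (F1 \<union> F2)" "R2 x \<in> cvs.span (F1 \<union> F2)"
      using F cvs.span_mono[of F1 "F1 \<union> F2"] cvs.span_mono[of F2 "F1 \<union> F2"] by auto
    thus "z \<in> cvs.span (F1 \<union> F2)" using x cvs.span_add by blast
  qed
  thus "finite_rank (R1 + R2)" unfolding finite_rank_def cspan_cvs using F by blast
qed

lemma finite_rank_scale: "finite_rank R \<Longrightarrow> (\<forall>x. blinfun_apply U x = scaleC c (blinfun_apply R x)) \<Longrightarrow> finite_rank U"
proof -
  assume "finite_rank R" and U: "\<forall>x. blinfun_apply U x = scaleC c (blinfun_apply R x)"
  then obtain F where F: "finite F" "range (blinfun_apply R) \<subseteq> cvs.span F"
    unfolding finite_rank_def cspan_cvs by blast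
  have "blinfun_apply U x \<in> cvs.span F" for x
    using U cvs.span_scale[OF subsetD[OF F(2) rangeI]] by simp
  hence "range (blinfun_apply U) \<subseteq> cvs.span F" by blast
  thus "finite_rank U" unfolding finite_rank_def cspan_cvs using F by blast
qed

lemma phi_zero: "phi 0 i = 0" unfolding phi_def by (simp add: cdual_zero)
lemma phi_add: "phi (R1 + R2) i = phi R1 i + phi R2 i"
  unfolding phi_def by (simp add: plus_blinfun.rep_eq cdual_add)
lemma phi_scale: "(\<forall>x. blinfun_apply U x = scaleC c (blinfun_apply R x)) \<Longrightarrow> phi U i = c * phi R i"
  unfolding phi_def by (simp add: cdual_scaleC)

lemma interpolate:
  fixes \<E> :: "'a::complex_banach set set" and J :: "('a \<Rightarrow>\<^sub>L 'a) set"
  assumes nest: "nest \<E>" and bim: "bimodule (nest_alg \<E>) J" and TJ: "T \<in> J" and F: "finite F"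
  shows "\<exists>R\<in>{T \<in> J. finite_rank T}. \<forall>i\<in>F. phi R i = phi T i"
proof -
  define J0 where "J0 = {T \<in> J. finite_rank T}"
  have J: "0 \<in> J" "\<forall>S\<in>J. \<forall>T\<in>J. S + T \<in> J"
    "\<forall>c. \<forall>T\<in>J. \<exists>U\<in>J. \<forall>x. blinfun_apply U x = scaleC c (blinfun_apply T x)"
    using bim unfolding bimodule_def by blast+
  define S where "S = phi ` J0"
  have "\<exists>s\<in>S. \<forall>i\<in>F. s i = phi T i"
  proof (rule interp[OF F])
    have e0: "(\<lambda>i. 0) = phi 0" by (simp add: phi_zero fun_eq_iff)
    have "0 \<in> J0" unfolding J0_def using J(1) finite_rank_zero by blast
    thus "(\<lambda>i. 0) \<in> S" unfolding S_def by (rule image_eqI[where f=phi and x=0, OF e0])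
    show "\<forall>s\<in>S. \<forall>t\<in>S. (\<lambda>i. s i + t i) \<in> S"
    proof (intro ballI)
      fix s t assume "s \<in> S" "t \<in> S"
      then obtain R1 R2 where R: "R1 \<in> J0" "R2 \<in> J0" "s = phi R1" "t = phi R2" unfolding S_def by blast
      have "R1 + R2 \<in> J0" using R J(2) finite_rank_add unfolding J0_def by blast
      moreover have "(\<lambda>i. s i + t i) = phi (R1 + R2)" using R by (simp add: phi_add fun_eq_iff)
      ultimately show "(\<lambda>i. s i + t i) \<in> S" unfolding S_def by (intro image_eqI[of _ phi "R1 + R2"])
    qed
    show "\<forall>s\<in>S. \<forall>c. (\<lambda>i. c * s i) \<in> S"
    proof (intro ballI allI)
      fix s c assume "s \<in> S"
      then obtain R where R: "R \<in> J0" "s = phi R" unfolding S_def by blast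
      obtain U where U: "U \<in> J" "\<forall>x. blinfun_apply U x = scaleC c (blinfun_apply R x)"
        using J(3) R(1) unfolding J0_def by blast
      have "finite_rank R" using R(1) unfolding J0_def by blast
      hence "U \<in> J0" using U finite_rank_scale unfolding J0_def by blast
      moreover have "(\<lambda>i. c * s i) = phi U" using R(2) phi_scale[OF U(2)] by (simp add: fun_eq_iff)
      ultimately show "(\<lambda>i. c * s i) \<in> S" unfolding S_def by (intro image_eqI[of _ phi U])
    qed
    show "\<forall>c. (\<forall>s\<in>S. (\<Sum>i\<in>F. c i * s i) = 0) \<longrightarrow> (\<Sum>i\<in>F. c i * phi T i) = 0"
    proof (intro allI impI)
      fix c assume c: "\<forall>s\<in>S. (\<Sum>i\<in>F. c i * s i) = 0"
      have "\<forall>R\<in>J. finite_rank R \<longrightarrow> (\<Sum>i\<in>F. c i * phi R i) = 0"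
      proof (intro ballI impI)
        fix R assume "R \<in> J" "finite_rank R"
        hence "phi R \<in> S" unfolding S_def J0_def by blast
        thus "(\<Sum>i\<in>F. c i * phi R i) = 0" using c by blast
      qed
      thus "(\<Sum>i\<in>F. c i * phi T i) = 0" using annih[OF nest bim TJ F] by blast
    qed
  qed
  then obtain s where "s \<in> S" "\<forall>i\<in>F. s i = phi T i" by blast
  then obtain R where "R \<in> J0" "\<forall>i\<in>F. phi R i = phi T i" unfolding S_def by blast
  thus ?thesis unfolding J0_def by blast
qed

theorem mainTheorem10:
  fixes \<E> :: "'a::complex_banach set set" and J :: "('a \<Rightarrow>\<^sub>L 'a) set"
  assumes "nest \<E>"
    and "bimodule (nest_alg \<E>) J"
    and "closedin wot_B J"
  shows "J = wot_B closure_of {T \<in> J. finite_rank T}"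
proof
  show "wot_B closure_of {T \<in> J. finite_rank T} \<subseteq> J"
    by (rule closure_of_minimal[OF _ assms(3)]) blast
  show "J \<subseteq> wot_B closure_of {T \<in> J. finite_rank T}"
  proof
    fix T assume TJ: "T \<in> J"
    have Jb: "J \<subseteq> bops" using assms(2) unfolding bimodule_def by blast
    have top: "topspace wot_B = bops"
      unfolding wot_B_def wot_eq by (simp add: topspace_pullback_topology)
    show "T \<in> wot_B closure_of {T \<in> J. finite_rank T}"
      unfolding in_closure_of
    proof (intro conjI allI impI)
      show "T \<in> topspace wot_B" using top Jb TJ by blast
      fix U assume U: "T \<in> U \<and> openin wot_B U"
      then obtain U' where U': "openin wot U'" "U = U' \<inter> bops"
        unfolding wot_B_def openin_subtopology by blast
      then obtain V where V: "openin (product_topology (\<lambda>_. euclidean) UNIV) V" "U' = phi -` V \<inter> UNIV"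
        unfolding wot_eq openin_pullback_topology by blast
      have "phi T \<in> V" using U U' V by blast
      then obtain W where W: "finite {i \<in> UNIV. W i \<noteq> topspace euclidean}"
          "phi T \<in> Pi\<^sub>E UNIV W" "Pi\<^sub>E UNIV W \<subseteq> V"
        using V(1) unfolding openin_product_topology_alt by blast
      define F where "F = {i \<in> UNIV. W i \<noteq> topspace euclidean}"
      obtain R where R: "R \<in> {T \<in> J. finite_rank T}" "\<forall>i\<in>F. phi R i = phi T i"
        using interpolate[OF assms(1,2) TJ] W(1) F_def by blast
      have "phi R \<in> Pi\<^sub>E UNIV W"
      proof -
        have "phi R i \<in> W i" for i
        proof (cases "i \<in> F")
          case True
          have "phi T i \<in> W i" using W(2) unfolding PiE_def Pi_def by blast
          thus ?thesis using R(2) True by simp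
        next
          case False thus ?thesis unfolding F_def by simp
        qed
        thus ?thesis by (simp add: PiE_def Pi_def)
      qed
      hence "R \<in> U" using W(3) V(2) U'(2) R(1) Jb by blast
      thus "\<exists>y. y \<in> {T \<in> J. finite_rank T} \<and> y \<in> U" using R(1) by blast
    qed
  qed
qed

end
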